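(* Let $q$ be the morphism on the alphabet $\{0,1,\ldots,21\}$ and $\gamma$ the coding to $\{0,1\}$ defined by (letters in images separated by commas): $q(0)=0,1$; $q(1)=2,3$; $q(2)=4,5$; $q(3)=6,7$; $q(4)=8,9$; $q(5)=10,11$; $q(6)=12,7$; $q(7)=8,9$; $q(8)=13,14$; $q(9)=15,1$; $q(10)=2,16$; $q(11)=7,17$; $q(12)=6,4$; $q(13)=2,16$; $q(14)=18,19$; $q(15)=0,1$; $q(16)=6,7$; $q(17)=10,11$; $q(18)=20,9$; $q(19)=10,21$; $q(20)=13,14$; $q(21)=18,19$; $\gamma(i)=1$ for $i\in\{0,1,3,6,7,11,12,13,14,17,19,20\}$ and $\gamma(i)=0$ for $i\in\{2,4,5,8,9,10,15,16,18,21\}$. Then the infinite word $\gamma(q^\omega(0))=11010011000111001101001110001101000111010011000\cdots$ contains only three distinct squares: $0^2$, $1^2$, and $(10)^2$. It has total weight $44$.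
   Context: A square is a nonempty word $xx$; "containing" means as a factor. $q^\omega(0)$ is the infinite fixed point of $q$ starting with $0$. The weight of a morphism $h:\Sigma^*\to\Sigma^*$ is $\sum_{a\in\Sigma}|h(a)|$, and the weight of a $k$-automatic word is the weight of its defining $k$-uniform morphism (here $2\cdot 22=44$). *)

theory Defs
  imports Main
begin

definition q_table :: "nat list list" where
  "q_table = [[0,1],[2,3],[4,5],[6,7],[8,9],[10,11],[12,7],[8,9],[13,14],[15,1],
              [2,16],[7,17],[6,4],[2,16],[18,19],[0,1],[6,7],[10,11],[20,9],[10,21],
              [13,14],[18,19]]"

definition q :: "nat \<Rightarrow> nat list" where
  "q a = q_table ! a"

definition q_star :: "nat list \<Rightarrow> nat list" where
  "q_star xs = concat (map q xs)"

definition gamma :: "nat \<Rightarrow> nat" where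
  "gamma i = (if i \<in> {0,1,3,6,7,11,12,13,14,17,19,20} then 1 else 0)"

text \<open>The infinite fixed point q^omega(0): since q(0) = 0 1, the words q^n(0) form a
  chain of prefixes of length 2^n; its n-th letter is read off q^(n+1)(0).\<close>
definition q_omega :: "nat \<Rightarrow> nat" where
  "q_omega n = ((q_star ^^ Suc n) [0]) ! n"

definition factor_of :: "nat list \<Rightarrow> (nat \<Rightarrow> nat) \<Rightarrow> bool" where
  "factor_of x u \<longleftrightarrow> (\<exists>i. \<forall>j < length x. u (i + j) = x ! j)"

definition weight :: "nat \<Rightarrow> (nat \<Rightarrow> nat list) \<Rightarrow> nat" where
  "weight k h = (\<Sum>a<k. length (h a))"

end

theory Submission imports Defs begin


datatype lt = L0 | L1 | L2 | L3 | L4 | L5 | L6 | L7 | L8 | L9 | L10 | L11 | L12 | L13 | L14 | L15 | L16 | L17 | L18 | L19 | L20 | L21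

fun qd0 :: "lt \<Rightarrow> lt" where
  "qd0 L0 = L0"
| "qd0 L1 = L2"
| "qd0 L2 = L4"
| "qd0 L3 = L6"
| "qd0 L4 = L8"
| "qd0 L5 = L10"
| "qd0 L6 = L12"
| "qd0 L7 = L8"
| "qd0 L8 = L13"
| "qd0 L9 = L15"
| "qd0 L10 = L2"
| "qd0 L11 = L7"
| "qd0 L12 = L6"
| "qd0 L13 = L2"
| "qd0 L14 = L18"
| "qd0 L15 = L0"
| "qd0 L16 = L6"
| "qd0 L17 = L10"
| "qd0 L18 = L20"
| "qd0 L19 = L10"
| "qd0 L20 = L13"
| "qd0 L21 = L18"

fun qd1 :: "lt \<Rightarrow> lt" where
  "qd1 L0 = L1"
| "qd1 L1 = L3"
| "qd1 L2 = L5"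
| "qd1 L3 = L7"
| "qd1 L4 = L9"
| "qd1 L5 = L11"
| "qd1 L6 = L7"
| "qd1 L7 = L9"
| "qd1 L8 = L14"
| "qd1 L9 = L1"
| "qd1 L10 = L16"
| "qd1 L11 = L17"
| "qd1 L12 = L4"
| "qd1 L13 = L16"
| "qd1 L14 = L19"
| "qd1 L15 = L1"
| "qd1 L16 = L7"
| "qd1 L17 = L11"
| "qd1 L18 = L9"
| "qd1 L19 = L21"
| "qd1 L20 = L14"
| "qd1 L21 = L19"

fun ordl :: "lt \<Rightarrow> nat" where
  "ordl L0 = 0"
| "ordl L1 = 1"
| "ordl L2 = 2"
| "ordl L3 = 3"
| "ordl L4 = 4"
| "ordl L5 = 5"
| "ordl L6 = 6"
| "ordl L7 = 7"
| "ordl L8 = 8"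
| "ordl L9 = 9"
| "ordl L10 = 10"
| "ordl L11 = 11"
| "ordl L12 = 12"
| "ordl L13 = 13"
| "ordl L14 = 14"
| "ordl L15 = 15"
| "ordl L16 = 16"
| "ordl L17 = 17"
| "ordl L18 = 18"
| "ordl L19 = 19"
| "ordl L20 = 20"
| "ordl L21 = 21"

fun gd :: "lt \<Rightarrow> nat" where
  "gd L0 = 1"
| "gd L1 = 1"
| "gd L2 = 0"
| "gd L3 = 1"
| "gd L4 = 0"
| "gd L5 = 0"
| "gd L6 = 1"
| "gd L7 = 1"
| "gd L8 = 0"
| "gd L9 = 0"
| "gd L10 = 0"
| "gd L11 = 1"
| "gd L12 = 1"
| "gd L13 = 1"
| "gd L14 = 1"
| "gd L15 = 0"
| "gd L16 = 0"
| "gd L17 = 1"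
| "gd L18 = 0"
| "gd L19 = 1"
| "gd L20 = 1"
| "gd L21 = 0"

definition allL :: "lt list" where "allL = [L0,L1,L2,L3,L4,L5,L6,L7,L8,L9,L10,L11,L12,L13,L14,L15,L16,L17,L18,L19,L20,L21]"

definition FF :: "lt list list" where
  "FF = [[L0,L1,L2,L3,L4,L5,L6,L7,L8,L9,L10,L11,L12,L7,L8,L9,L13,L14,L15,L1],
    [L0,L1,L2,L3,L4,L5,L6,L7,L20,L9,L10,L21,L0,L1,L2,L3,L4,L5,L6,L7],
    [L1,L2,L3,L4,L5,L6,L7,L8,L9,L10,L11,L12,L7,L8,L9,L13,L14,L15,L1,L2],
    [L1,L2,L3,L4,L5,L6,L7,L20,L9,L10,L21,L0,L1,L2,L3,L4,L5,L6,L7,L8],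
    [L1,L2,L16,L7,L17,L6,L4,L8,L9,L13,L14,L15,L1,L2,L16,L18,L19,L0,L1,L2],
    [L1,L2,L16,L18,L19,L0,L1,L2,L3,L4,L5,L6,L7,L8,L9,L10,L11,L12,L7,L8],
    [L1,L2,L16,L18,L19,L0,L1,L2,L3,L4,L5,L6,L7,L20,L9,L10,L21,L0,L1,L2],
    [L2,L3,L4,L5,L6,L7,L8,L9,L10,L11,L12,L7,L8,L9,L13,L14,L15,L1,L2,L16],
    [L2,L3,L4,L5,L6,L7,L20,L9,L10,L21,L0,L1,L2,L3,L4,L5,L6,L7,L8,L9],
    [L2,L16,L7,L17,L6,L4,L8,L9,L13,L14,L15,L1,L2,L16,L18,L19,L0,L1,L2,L3],
    [L2,L16,L18,L19,L0,L1,L2,L3,L4,L5,L6,L7,L8,L9,L10,L11,L12,L7,L8,L9],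
    [L2,L16,L18,L19,L0,L1,L2,L3,L4,L5,L6,L7,L20,L9,L10,L21,L0,L1,L2,L3],
    [L3,L4,L5,L6,L7,L8,L9,L10,L11,L12,L7,L8,L9,L13,L14,L15,L1,L2,L16,L7],
    [L3,L4,L5,L6,L7,L8,L9,L10,L11,L12,L7,L8,L9,L13,L14,L15,L1,L2,L16,L18],
    [L3,L4,L5,L6,L7,L20,L9,L10,L21,L0,L1,L2,L3,L4,L5,L6,L7,L8,L9,L10],
    [L4,L5,L6,L7,L8,L9,L10,L11,L12,L7,L8,L9,L13,L14,L15,L1,L2,L16,L7,L17],
    [L4,L5,L6,L7,L8,L9,L10,L11,L12,L7,L8,L9,L13,L14,L15,L1,L2,L16,L18,L19],
    [L4,L5,L6,L7,L20,L9,L10,L21,L0,L1,L2,L3,L4,L5,L6,L7,L8,L9,L10,L11],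
    [L4,L8,L9,L13,L14,L15,L1,L2,L16,L18,L19,L0,L1,L2,L3,L4,L5,L6,L7,L8],
    [L4,L8,L9,L13,L14,L15,L1,L2,L16,L18,L19,L0,L1,L2,L3,L4,L5,L6,L7,L20],
    [L5,L6,L7,L8,L9,L10,L11,L12,L7,L8,L9,L13,L14,L15,L1,L2,L16,L7,L17,L6],
    [L5,L6,L7,L8,L9,L10,L11,L12,L7,L8,L9,L13,L14,L15,L1,L2,L16,L18,L19,L0],
    [L5,L6,L7,L20,L9,L10,L21,L0,L1,L2,L3,L4,L5,L6,L7,L8,L9,L10,L11,L12],
    [L6,L4,L8,L9,L13,L14,L15,L1,L2,L16,L18,L19,L0,L1,L2,L3,L4,L5,L6,L7],
    [L6,L7,L8,L9,L10,L11,L12,L7,L8,L9,L13,L14,L15,L1,L2,L16,L7,L17,L6,L4],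
    [L6,L7,L8,L9,L10,L11,L12,L7,L8,L9,L13,L14,L15,L1,L2,L16,L18,L19,L0,L1],
    [L6,L7,L20,L9,L10,L21,L0,L1,L2,L3,L4,L5,L6,L7,L8,L9,L10,L11,L12,L7],
    [L7,L8,L9,L10,L11,L12,L7,L8,L9,L13,L14,L15,L1,L2,L16,L7,L17,L6,L4,L8],
    [L7,L8,L9,L10,L11,L12,L7,L8,L9,L13,L14,L15,L1,L2,L16,L18,L19,L0,L1,L2],
    [L7,L8,L9,L13,L14,L15,L1,L2,L16,L7,L17,L6,L4,L8,L9,L13,L14,L15,L1,L2],
    [L7,L8,L9,L13,L14,L15,L1,L2,L16,L18,L19,L0,L1,L2,L3,L4,L5,L6,L7,L8],
    [L7,L8,L9,L13,L14,L15,L1,L2,L16,L18,L19,L0,L1,L2,L3,L4,L5,L6,L7,L20],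
    [L7,L17,L6,L4,L8,L9,L13,L14,L15,L1,L2,L16,L18,L19,L0,L1,L2,L3,L4,L5],
    [L7,L20,L9,L10,L21,L0,L1,L2,L3,L4,L5,L6,L7,L8,L9,L10,L11,L12,L7,L8],
    [L8,L9,L10,L11,L12,L7,L8,L9,L13,L14,L15,L1,L2,L16,L7,L17,L6,L4,L8,L9],
    [L8,L9,L10,L11,L12,L7,L8,L9,L13,L14,L15,L1,L2,L16,L18,L19,L0,L1,L2,L3],
    [L8,L9,L13,L14,L15,L1,L2,L16,L7,L17,L6,L4,L8,L9,L13,L14,L15,L1,L2,L16],
    [L8,L9,L13,L14,L15,L1,L2,L16,L18,L19,L0,L1,L2,L3,L4,L5,L6,L7,L8,L9],
    [L8,L9,L13,L14,L15,L1,L2,L16,L18,L19,L0,L1,L2,L3,L4,L5,L6,L7,L20,L9],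
    [L9,L10,L11,L12,L7,L8,L9,L13,L14,L15,L1,L2,L16,L7,L17,L6,L4,L8,L9,L13],
    [L9,L10,L11,L12,L7,L8,L9,L13,L14,L15,L1,L2,L16,L18,L19,L0,L1,L2,L3,L4],
    [L9,L10,L21,L0,L1,L2,L3,L4,L5,L6,L7,L8,L9,L10,L11,L12,L7,L8,L9,L13],
    [L9,L13,L14,L15,L1,L2,L16,L7,L17,L6,L4,L8,L9,L13,L14,L15,L1,L2,L16,L18],
    [L9,L13,L14,L15,L1,L2,L16,L18,L19,L0,L1,L2,L3,L4,L5,L6,L7,L8,L9,L10],
    [L9,L13,L14,L15,L1,L2,L16,L18,L19,L0,L1,L2,L3,L4,L5,L6,L7,L20,L9,L10],
    [L10,L11,L12,L7,L8,L9,L13,L14,L15,L1,L2,L16,L7,L17,L6,L4,L8,L9,L13,L14],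
    [L10,L11,L12,L7,L8,L9,L13,L14,L15,L1,L2,L16,L18,L19,L0,L1,L2,L3,L4,L5],
    [L10,L21,L0,L1,L2,L3,L4,L5,L6,L7,L8,L9,L10,L11,L12,L7,L8,L9,L13,L14],
    [L11,L12,L7,L8,L9,L13,L14,L15,L1,L2,L16,L7,L17,L6,L4,L8,L9,L13,L14,L15],
    [L11,L12,L7,L8,L9,L13,L14,L15,L1,L2,L16,L18,L19,L0,L1,L2,L3,L4,L5,L6],
    [L12,L7,L8,L9,L13,L14,L15,L1,L2,L16,L7,L17,L6,L4,L8,L9,L13,L14,L15,L1],
    [L12,L7,L8,L9,L13,L14,L15,L1,L2,L16,L18,L19,L0,L1,L2,L3,L4,L5,L6,L7],
    [L13,L14,L15,L1,L2,L16,L7,L17,L6,L4,L8,L9,L13,L14,L15,L1,L2,L16,L18,L19],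
    [L13,L14,L15,L1,L2,L16,L18,L19,L0,L1,L2,L3,L4,L5,L6,L7,L8,L9,L10,L11],
    [L13,L14,L15,L1,L2,L16,L18,L19,L0,L1,L2,L3,L4,L5,L6,L7,L20,L9,L10,L21],
    [L14,L15,L1,L2,L16,L7,L17,L6,L4,L8,L9,L13,L14,L15,L1,L2,L16,L18,L19,L0],
    [L14,L15,L1,L2,L16,L18,L19,L0,L1,L2,L3,L4,L5,L6,L7,L8,L9,L10,L11,L12],
    [L14,L15,L1,L2,L16,L18,L19,L0,L1,L2,L3,L4,L5,L6,L7,L20,L9,L10,L21,L0],
    [L15,L1,L2,L16,L7,L17,L6,L4,L8,L9,L13,L14,L15,L1,L2,L16,L18,L19,L0,L1],
    [L15,L1,L2,L16,L18,L19,L0,L1,L2,L3,L4,L5,L6,L7,L8,L9,L10,L11,L12,L7],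
    [L15,L1,L2,L16,L18,L19,L0,L1,L2,L3,L4,L5,L6,L7,L20,L9,L10,L21,L0,L1],
    [L16,L7,L17,L6,L4,L8,L9,L13,L14,L15,L1,L2,L16,L18,L19,L0,L1,L2,L3,L4],
    [L16,L18,L19,L0,L1,L2,L3,L4,L5,L6,L7,L8,L9,L10,L11,L12,L7,L8,L9,L13],
    [L16,L18,L19,L0,L1,L2,L3,L4,L5,L6,L7,L20,L9,L10,L21,L0,L1,L2,L3,L4],
    [L17,L6,L4,L8,L9,L13,L14,L15,L1,L2,L16,L18,L19,L0,L1,L2,L3,L4,L5,L6],
    [L18,L19,L0,L1,L2,L3,L4,L5,L6,L7,L8,L9,L10,L11,L12,L7,L8,L9,L13,L14],
    [L18,L19,L0,L1,L2,L3,L4,L5,L6,L7,L20,L9,L10,L21,L0,L1,L2,L3,L4,L5],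
    [L19,L0,L1,L2,L3,L4,L5,L6,L7,L8,L9,L10,L11,L12,L7,L8,L9,L13,L14,L15],
    [L19,L0,L1,L2,L3,L4,L5,L6,L7,L20,L9,L10,L21,L0,L1,L2,L3,L4,L5,L6],
    [L20,L9,L10,L21,L0,L1,L2,L3,L4,L5,L6,L7,L8,L9,L10,L11,L12,L7,L8,L9],
    [L21,L0,L1,L2,L3,L4,L5,L6,L7,L8,L9,L10,L11,L12,L7,L8,L9,L13,L14,L15]]"

definition W0 :: "lt list list" where
  "W0 = [[L0,L1,L2,L3,L4,L5,L6,L7,L8],
    [L0,L1,L2,L3,L4,L5,L6,L7,L20],
    [L2,L3,L4,L5,L6,L7,L8,L9,L10],
    [L2,L3,L4,L5,L6,L7,L20,L9,L10],
    [L2,L16,L7,L17,L6,L4,L8,L9,L13],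
    [L2,L16,L18,L19,L0,L1,L2,L3,L4],
    [L4,L5,L6,L7,L8,L9,L10,L11,L12],
    [L4,L5,L6,L7,L20,L9,L10,L21,L0],
    [L6,L4,L8,L9,L13,L14,L15,L1,L2],
    [L6,L7,L8,L9,L10,L11,L12,L7,L8],
    [L6,L7,L20,L9,L10,L21,L0,L1,L2],
    [L7,L17,L6,L4,L8,L9,L13,L14,L15],
    [L8,L9,L10,L11,L12,L7,L8,L9,L13],
    [L8,L9,L13,L14,L15,L1,L2,L16,L7],
    [L8,L9,L13,L14,L15,L1,L2,L16,L18],
    [L10,L11,L12,L7,L8,L9,L13,L14,L15],
    [L10,L21,L0,L1,L2,L3,L4,L5,L6],
    [L12,L7,L8,L9,L13,L14,L15,L1,L2],
    [L13,L14,L15,L1,L2,L16,L7,L17,L6],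
    [L13,L14,L15,L1,L2,L16,L18,L19,L0],
    [L15,L1,L2,L16,L7,L17,L6,L4,L8],
    [L15,L1,L2,L16,L18,L19,L0,L1,L2],
    [L18,L19,L0,L1,L2,L3,L4,L5,L6],
    [L20,L9,L10,L21,L0,L1,L2,L3,L4]]"

definition W1 :: "lt list list" where
  "W1 = [[L1,L2,L3,L4,L5,L6,L7,L8,L9],
    [L1,L2,L3,L4,L5,L6,L7,L20,L9],
    [L1,L2,L16,L7,L17,L6,L4,L8,L9],
    [L1,L2,L16,L18,L19,L0,L1,L2,L3],
    [L3,L4,L5,L6,L7,L8,L9,L10,L11],
    [L3,L4,L5,L6,L7,L20,L9,L10,L21],
    [L4,L8,L9,L13,L14,L15,L1,L2,L16],
    [L5,L6,L7,L8,L9,L10,L11,L12,L7],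
    [L5,L6,L7,L20,L9,L10,L21,L0,L1],
    [L7,L8,L9,L10,L11,L12,L7,L8,L9],
    [L7,L8,L9,L13,L14,L15,L1,L2,L16],
    [L7,L20,L9,L10,L21,L0,L1,L2,L3],
    [L9,L10,L11,L12,L7,L8,L9,L13,L14],
    [L9,L10,L21,L0,L1,L2,L3,L4,L5],
    [L9,L13,L14,L15,L1,L2,L16,L7,L17],
    [L9,L13,L14,L15,L1,L2,L16,L18,L19],
    [L11,L12,L7,L8,L9,L13,L14,L15,L1],
    [L14,L15,L1,L2,L16,L7,L17,L6,L4],
    [L14,L15,L1,L2,L16,L18,L19,L0,L1],
    [L16,L7,L17,L6,L4,L8,L9,L13,L14],
    [L16,L18,L19,L0,L1,L2,L3,L4,L5],
    [L17,L6,L4,L8,L9,L13,L14,L15,L1],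
    [L19,L0,L1,L2,L3,L4,L5,L6,L7],
    [L21,L0,L1,L2,L3,L4,L5,L6,L7]]"

definition LL :: "(nat list \<times> nat list \<times> nat list \<times> nat) list" where
  "LL = [([0,0,0,0,0,0,0,0,0,0,0,0,0,0,0,0,0,0,0,0,0,0],[1,1,0,1,0,0,1,1,0,0,0,1,1,1,1,0,0,1,0,1,1,0],[0,0,0,0,0,0,0,0,0,0,0,0,0,0,0,0,0,0,0,0,0,0],0),
    ([0,0,0,0,0,0,0,0,0,0,0,0,0,0,0,0,0,0,0,0,0,0],[0,1,2,0,2,1,0,2,0,1,2,0,12,2,1,0,0,1,12,2,0,1],[0,0,0,0,0,0,0,0,0,0,0,0,0,0,0,0,0,0,0,0,0,0],0),
    ([0,0,2,0,2,0,0,2,0,0,2,0,2,2,0,0,0,0,2,2,0,0],[0,1,2,0,2,1,0,2,0,1,2,0,12,2,1,0,0,1,12,2,0,1],[0,1,1,0,1,1,0,1,0,1,1,0,0,1,1,0,0,1,0,1,0,1],1),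
    ([0,0,0,0,0,0,0,0,0,0,0,0,0,0,0,0,0,0,0,0,0,0],[0,1,2,3,0,1,6,0,2,0,1,2,3,1,6,0,3,1,0,2,2,6],[0,0,0,0,0,0,0,0,0,0,0,0,0,0,0,0,0,0,0,0,0,0],0),
    ([0,1,0,3,0,1,3,0,0,0,1,0,3,1,3,0,3,1,0,0,0,3],[0,1,2,3,0,1,6,0,2,0,1,2,3,1,6,0,3,1,0,2,2,6],[0,1,1,0,0,1,6,0,1,0,1,1,0,1,6,0,0,1,0,1,1,6],1),
    ([0,0,0,3,0,0,3,0,0,0,0,0,3,0,3,0,3,0,0,0,0,3],[0,1,2,3,0,1,6,0,2,0,1,2,3,1,6,0,3,1,0,2,2,6],[0,1,2,0,0,1,6,0,2,0,1,2,0,1,6,0,0,1,0,2,2,6],1),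
    ([0,1,2,3,0,1,6,0,2,0,1,2,3,1,6,0,3,1,0,2,2,6],[0,1,2,3,0,1,6,0,2,0,1,2,3,1,6,0,3,1,0,2,2,6],[0,1,1,0,0,1,0,0,1,0,1,1,0,1,0,0,0,1,0,1,1,0],1),
    ([0,0,0,0,0,0,0,0,0,0,0,0,0,0,0,0,0,0,0,0,0,0],[0,1,0,3,4,5,6,4,8,0,1,0,3,1,14,0,3,5,4,8,8,14],[0,0,0,0,0,0,0,0,0,0,0,0,0,0,0,0,0,0,0,0,0,0],0),
    ([0,1,0,3,3,5,3,3,8,0,1,0,3,1,5,0,3,5,3,8,8,5],[0,1,0,3,4,5,6,4,8,0,1,0,3,1,14,0,3,5,4,8,8,14],[0,1,0,3,1,5,6,1,5,0,1,0,3,1,0,0,3,5,1,5,5,0],1),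
    ([0,1,0,3,3,3,3,3,1,0,1,0,3,1,3,0,3,3,3,1,1,3],[0,1,0,3,4,5,6,4,8,0,1,0,3,1,14,0,3,5,4,8,8,14],[0,1,0,3,1,5,6,1,8,0,1,0,3,1,0,0,3,5,1,8,8,0],1),
    ([0,1,0,3,4,5,3,4,8,0,1,0,3,1,14,0,3,5,4,8,8,14],[0,1,0,3,4,5,6,4,8,0,1,0,3,1,14,0,3,5,4,8,8,14],[0,1,0,3,1,1,0,1,1,0,1,0,3,1,0,0,3,1,1,1,1,0],1),
    ([0,1,0,0,0,0,0,0,1,0,1,0,0,1,0,0,0,0,0,1,1,0],[0,1,0,3,4,5,6,4,8,0,1,0,3,1,14,0,3,5,4,8,8,14],[0,1,0,3,1,5,6,1,8,0,1,0,3,1,14,0,3,5,1,8,8,14],1),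
    ([0,1,0,3,4,5,3,4,8,0,1,0,3,1,5,0,3,5,4,8,8,5],[0,1,0,3,4,5,6,4,8,0,1,0,3,1,14,0,3,5,4,8,8,14],[0,1,0,3,1,5,0,1,5,0,1,0,3,1,0,0,3,5,1,5,5,0],1),
    ([0,1,0,3,3,5,3,3,8,0,1,0,3,1,5,0,3,5,3,8,8,5],[0,1,0,3,4,5,6,4,8,0,1,0,3,1,14,0,3,5,4,8,8,14],[0,1,0,3,1,5,6,1,8,0,1,0,3,1,0,0,3,5,1,8,8,0],1),
    ([0,1,0,3,4,5,6,4,8,0,1,0,3,1,14,0,3,5,4,8,8,14],[0,1,0,3,4,5,6,4,8,0,1,0,3,1,14,0,3,5,4,8,8,14],[0,1,0,0,1,1,0,1,1,0,1,0,0,1,0,0,0,1,1,1,1,0],1),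
    ([0,0,0,0,0,0,0,0,0,0,0,0,0,0,0,0,0,0,0,0,0,0],[0,1,2,3,4,5,6,4,8,0,1,2,3,1,14,0,3,5,4,8,8,14],[0,0,0,0,0,0,0,0,0,0,0,0,0,0,0,0,0,0,0,0,0,0],0),
    ([0,1,2,3,4,4,3,4,8,0,1,2,3,1,14,0,3,4,4,8,8,14],[0,1,2,3,4,5,6,4,8,0,1,2,3,1,14,0,3,5,4,8,8,14],[0,0,2,3,4,5,6,4,5,0,0,2,3,0,2,0,3,5,4,5,5,2],1),
    ([0,1,2,1,4,4,1,4,2,0,1,2,1,1,14,0,1,4,4,2,2,14],[0,1,2,3,4,5,6,4,8,0,1,2,3,1,14,0,3,5,4,8,8,14],[0,1,2,3,4,5,6,4,5,0,1,2,3,1,2,0,3,5,4,5,5,2],1),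
    ([0,1,2,3,4,5,3,4,8,0,1,2,3,1,14,0,3,5,4,8,8,14],[0,1,2,3,4,5,6,4,8,0,1,2,3,1,14,0,3,5,4,8,8,14],[0,0,2,3,4,2,6,4,2,0,0,2,3,0,2,0,3,2,4,2,2,2],1),
    ([0,1,1,1,4,4,1,4,1,0,1,1,1,1,0,0,1,4,4,1,1,0],[0,1,2,3,4,5,6,4,8,0,1,2,3,1,14,0,3,5,4,8,8,14],[0,1,2,3,4,5,6,4,5,0,1,2,3,1,14,0,3,5,4,5,5,14],1),
    ([0,1,2,3,4,4,3,4,8,0,1,2,3,1,14,0,3,4,4,8,8,14],[0,1,2,3,4,5,6,4,8,0,1,2,3,1,14,0,3,5,4,8,8,14],[0,0,2,3,4,2,6,4,2,0,0,2,3,0,2,0,3,2,4,2,2,2],1),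
    ([0,1,2,3,4,4,3,4,8,0,1,2,3,1,14,0,3,4,4,8,8,14],[0,1,2,3,4,5,6,4,8,0,1,2,3,1,14,0,3,5,4,8,8,14],[0,1,2,3,4,5,6,4,5,0,1,2,3,1,2,0,3,5,4,5,5,2],1),
    ([0,1,2,3,4,5,3,4,8,0,1,2,3,1,14,0,3,5,4,8,8,14],[0,1,2,3,4,5,6,4,8,0,1,2,3,1,14,0,3,5,4,8,8,14],[0,0,2,0,2,2,6,2,2,0,0,2,0,0,2,0,0,2,2,2,2,2],1),
    ([0,1,1,1,1,1,1,1,1,0,1,1,1,1,0,0,1,1,1,1,1,0],[0,1,2,3,4,5,6,4,8,0,1,2,3,1,14,0,3,5,4,8,8,14],[0,1,2,3,4,5,6,4,8,0,1,2,3,1,14,0,3,5,4,8,8,14],1),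
    ([0,1,2,3,4,4,3,4,2,0,1,2,3,1,14,0,3,4,4,2,2,14],[0,1,2,3,4,5,6,4,8,0,1,2,3,1,14,0,3,5,4,8,8,14],[0,1,2,3,4,5,6,4,5,0,1,2,3,1,2,0,3,5,4,5,5,2],1),
    ([0,1,2,3,4,5,3,4,8,0,1,2,3,1,14,0,3,5,4,8,8,14],[0,1,2,3,4,5,6,4,8,0,1,2,3,1,14,0,3,5,4,8,8,14],[0,0,2,0,4,2,6,4,2,0,0,2,0,0,2,0,0,2,4,2,2,2],1),
    ([0,1,2,1,4,4,1,4,2,0,1,2,1,1,14,0,1,4,4,2,2,14],[0,1,2,3,4,5,6,4,8,0,1,2,3,1,14,0,3,5,4,8,8,14],[0,1,2,3,4,5,6,4,5,0,1,2,3,1,14,0,3,5,4,5,5,14],1),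
    ([0,1,2,3,4,5,6,4,8,0,1,2,3,1,14,0,3,5,4,8,8,14],[0,1,2,3,4,5,6,4,8,0,1,2,3,1,14,0,3,5,4,8,8,14],[0,0,2,0,2,2,0,2,2,0,0,2,0,0,2,0,0,2,2,2,2,2],1),
    ([0,1,2,3,4,5,3,4,8,0,1,2,3,1,14,0,3,5,4,8,8,14],[0,1,2,3,4,5,6,4,8,0,1,2,3,1,14,0,3,5,4,8,8,14],[0,1,2,3,4,5,6,4,5,0,1,2,3,1,2,0,3,5,4,5,5,2],1),
    ([0,1,2,2,4,5,2,4,8,0,1,2,2,1,14,0,2,5,4,8,8,14],[0,1,2,3,4,5,6,4,8,0,1,2,3,1,14,0,3,5,4,8,8,14],[0,1,2,3,4,5,6,4,5,0,1,2,3,1,2,0,3,5,4,5,5,2],1),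
    ([0,1,2,3,4,5,3,4,8,0,1,2,3,1,14,0,3,5,4,8,8,14],[0,1,2,3,4,5,6,4,8,0,1,2,3,1,14,0,3,5,4,8,8,14],[0,1,2,3,4,0,6,4,0,0,1,2,3,1,2,0,3,0,4,0,0,2],1),
    ([0,0,2,2,4,5,2,4,8,0,0,2,2,0,5,0,2,5,4,8,8,5],[0,1,2,3,4,5,6,4,8,0,1,2,3,1,14,0,3,5,4,8,8,14],[0,1,2,3,4,5,6,4,5,0,1,2,3,1,2,0,3,5,4,5,5,2],1),
    ([0,1,2,3,4,5,3,4,8,0,1,2,3,1,14,0,3,5,4,8,8,14],[0,1,2,3,4,5,6,4,8,0,1,2,3,1,14,0,3,5,4,8,8,14],[0,1,2,3,1,0,6,1,0,0,1,2,3,1,2,0,3,0,1,0,0,2],1),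
    ([0,0,2,2,4,0,2,4,4,0,0,2,2,0,0,0,2,0,4,4,4,0],[0,1,2,3,4,5,6,4,8,0,1,2,3,1,14,0,3,5,4,8,8,14],[0,1,2,3,4,5,6,4,8,0,1,2,3,1,2,0,3,5,4,8,8,2],1),
    ([0,1,2,3,4,5,3,4,8,0,1,2,3,1,14,0,3,5,4,8,8,14],[0,1,2,3,4,5,6,4,8,0,1,2,3,1,14,0,3,5,4,8,8,14],[0,1,1,3,1,0,0,1,0,0,1,1,3,1,1,0,3,0,1,0,0,1],1),
    ([0,0,0,0,4,0,0,4,4,0,0,0,0,0,0,0,0,0,4,4,4,0],[0,1,2,3,4,5,6,4,8,0,1,2,3,1,14,0,3,5,4,8,8,14],[0,1,2,3,4,5,6,4,8,0,1,2,3,1,14,0,3,5,4,8,8,14],1),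
    ([0,1,2,2,4,5,2,4,8,0,1,2,2,1,5,0,2,5,4,8,8,5],[0,1,2,3,4,5,6,4,8,0,1,2,3,1,14,0,3,5,4,8,8,14],[0,1,2,3,4,5,6,4,5,0,1,2,3,1,2,0,3,5,4,5,5,2],1),
    ([0,1,2,3,4,5,3,4,8,0,1,2,3,1,14,0,3,5,4,8,8,14],[0,1,2,3,4,5,6,4,8,0,1,2,3,1,14,0,3,5,4,8,8,14],[0,1,2,3,1,0,0,1,0,0,1,2,3,1,2,0,3,0,1,0,0,2],1),
    ([0,0,2,2,4,5,2,4,8,0,0,2,2,0,5,0,2,5,4,8,8,5],[0,1,2,3,4,5,6,4,8,0,1,2,3,1,14,0,3,5,4,8,8,14],[0,1,2,3,4,5,6,4,8,0,1,2,3,1,2,0,3,5,4,8,8,2],1),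
    ([0,1,2,3,4,5,6,4,8,0,1,2,3,1,14,0,3,5,4,8,8,14],[0,1,2,3,4,5,6,4,8,0,1,2,3,1,14,0,3,5,4,8,8,14],[0,1,1,0,1,0,0,1,0,0,1,1,0,1,1,0,0,0,1,0,0,1],1),
    ([0,1,2,3,4,1,3,4,8,0,1,2,3,1,14,0,3,1,4,8,8,14],[0,1,2,3,4,5,6,4,8,0,1,2,3,1,14,0,3,5,4,8,8,14],[0,1,2,3,4,5,6,4,5,0,1,2,3,1,2,0,3,5,4,5,5,2],1),
    ([0,1,2,3,4,5,3,4,8,0,1,2,3,1,14,0,3,5,4,8,8,14],[0,1,2,3,4,5,6,4,8,0,1,2,3,1,14,0,3,5,4,8,8,14],[0,1,2,3,0,5,6,0,5,0,1,2,3,1,2,0,3,5,0,5,5,2],1),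
    ([0,1,2,3,0,1,3,0,2,0,1,2,3,1,14,0,3,1,0,2,2,14],[0,1,2,3,4,5,6,4,8,0,1,2,3,1,14,0,3,5,4,8,8,14],[0,1,2,3,4,5,6,4,5,0,1,2,3,1,2,0,3,5,4,5,5,2],1),
    ([0,1,2,3,4,5,3,4,8,0,1,2,3,1,14,0,3,5,4,8,8,14],[0,1,2,3,4,5,6,4,8,0,1,2,3,1,14,0,3,5,4,8,8,14],[0,1,2,3,0,2,6,0,2,0,1,2,3,1,2,0,3,2,0,2,2,2],1),
    ([0,1,0,3,0,1,3,0,0,0,1,0,3,1,3,0,3,1,0,0,0,3],[0,1,2,3,4,5,6,4,8,0,1,2,3,1,14,0,3,5,4,8,8,14],[0,1,2,3,4,5,6,4,5,0,1,2,3,1,14,0,3,5,4,5,5,14],1),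
    ([0,1,2,3,4,5,3,4,8,0,1,2,3,1,14,0,3,5,4,8,8,14],[0,1,2,3,4,5,6,4,8,0,1,2,3,1,14,0,3,5,4,8,8,14],[0,1,1,0,0,1,6,0,1,0,1,1,0,1,1,0,0,1,0,1,1,1],1),
    ([0,0,0,3,0,0,3,0,0,0,0,0,3,0,3,0,3,0,0,0,0,3],[0,1,2,3,4,5,6,4,8,0,1,2,3,1,14,0,3,5,4,8,8,14],[0,1,2,3,4,5,6,4,8,0,1,2,3,1,14,0,3,5,4,8,8,14],1),
    ([0,1,2,3,4,1,3,4,2,0,1,2,3,1,14,0,3,1,4,2,2,14],[0,1,2,3,4,5,6,4,8,0,1,2,3,1,14,0,3,5,4,8,8,14],[0,1,2,3,4,5,6,4,5,0,1,2,3,1,2,0,3,5,4,5,5,2],1),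
    ([0,1,2,3,4,5,3,4,8,0,1,2,3,1,14,0,3,5,4,8,8,14],[0,1,2,3,4,5,6,4,8,0,1,2,3,1,14,0,3,5,4,8,8,14],[0,1,2,0,0,2,6,0,2,0,1,2,0,1,2,0,0,2,0,2,2,2],1),
    ([0,1,2,3,0,1,3,0,2,0,1,2,3,1,14,0,3,1,0,2,2,14],[0,1,2,3,4,5,6,4,8,0,1,2,3,1,14,0,3,5,4,8,8,14],[0,1,2,3,4,5,6,4,5,0,1,2,3,1,14,0,3,5,4,5,5,14],1),
    ([0,1,2,3,4,5,6,4,8,0,1,2,3,1,14,0,3,5,4,8,8,14],[0,1,2,3,4,5,6,4,8,0,1,2,3,1,14,0,3,5,4,8,8,14],[0,1,1,0,0,1,0,0,1,0,1,1,0,1,1,0,0,1,0,1,1,1],1),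
    ([0,1,0,3,4,5,3,4,8,0,1,0,3,1,14,0,3,5,4,8,8,14],[0,1,2,3,4,5,6,4,8,0,1,2,3,1,14,0,3,5,4,8,8,14],[0,1,2,3,4,5,6,4,5,0,1,2,3,1,2,0,3,5,4,5,5,2],1),
    ([0,1,2,3,4,5,3,4,8,0,1,2,3,1,14,0,3,5,4,8,8,14],[0,1,2,3,4,5,6,4,8,0,1,2,3,1,14,0,3,5,4,8,8,14],[0,1,0,3,4,5,6,4,5,0,1,0,3,1,0,0,3,5,4,5,5,0],1),
    ([0,1,0,3,3,5,3,3,8,0,1,0,3,1,5,0,3,5,3,8,8,5],[0,1,2,3,4,5,6,4,8,0,1,2,3,1,14,0,3,5,4,8,8,14],[0,1,2,3,4,5,6,4,5,0,1,2,3,1,2,0,3,5,4,5,5,2],1),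
    ([0,1,2,3,4,5,3,4,8,0,1,2,3,1,14,0,3,5,4,8,8,14],[0,1,2,3,4,5,6,4,8,0,1,2,3,1,14,0,3,5,4,8,8,14],[0,1,0,3,1,5,6,1,5,0,1,0,3,1,0,0,3,5,1,5,5,0],1),
    ([0,1,0,3,3,3,3,3,1,0,1,0,3,1,3,0,3,3,3,1,1,3],[0,1,2,3,4,5,6,4,8,0,1,2,3,1,14,0,3,5,4,8,8,14],[0,1,2,3,4,5,6,4,8,0,1,2,3,1,2,0,3,5,4,8,8,2],1),
    ([0,1,2,3,4,5,3,4,8,0,1,2,3,1,14,0,3,5,4,8,8,14],[0,1,2,3,4,5,6,4,8,0,1,2,3,1,14,0,3,5,4,8,8,14],[0,1,0,3,1,1,0,1,1,0,1,0,3,1,0,0,3,1,1,1,1,0],1),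
    ([0,1,0,0,0,0,0,0,1,0,1,0,0,1,0,0,0,0,0,1,1,0],[0,1,2,3,4,5,6,4,8,0,1,2,3,1,14,0,3,5,4,8,8,14],[0,1,2,3,4,5,6,4,8,0,1,2,3,1,14,0,3,5,4,8,8,14],1),
    ([0,1,0,3,4,5,3,4,8,0,1,0,3,1,5,0,3,5,4,8,8,5],[0,1,2,3,4,5,6,4,8,0,1,2,3,1,14,0,3,5,4,8,8,14],[0,1,2,3,4,5,6,4,5,0,1,2,3,1,2,0,3,5,4,5,5,2],1),
    ([0,1,2,3,4,5,3,4,8,0,1,2,3,1,14,0,3,5,4,8,8,14],[0,1,2,3,4,5,6,4,8,0,1,2,3,1,14,0,3,5,4,8,8,14],[0,1,0,3,1,5,0,1,5,0,1,0,3,1,0,0,3,5,1,5,5,0],1),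
    ([0,1,0,3,3,5,3,3,8,0,1,0,3,1,5,0,3,5,3,8,8,5],[0,1,2,3,4,5,6,4,8,0,1,2,3,1,14,0,3,5,4,8,8,14],[0,1,2,3,4,5,6,4,8,0,1,2,3,1,2,0,3,5,4,8,8,2],1),
    ([0,1,2,3,4,5,6,4,8,0,1,2,3,1,14,0,3,5,4,8,8,14],[0,1,2,3,4,5,6,4,8,0,1,2,3,1,14,0,3,5,4,8,8,14],[0,1,0,0,1,1,0,1,1,0,1,0,0,1,0,0,0,1,1,1,1,0],1),
    ([0,1,2,3,4,5,3,4,8,0,1,2,3,1,14,0,3,5,4,8,8,14],[0,1,2,3,4,5,6,4,8,0,1,2,3,1,14,0,3,5,4,8,8,14],[0,0,2,3,4,5,6,4,5,0,0,2,3,0,2,0,3,5,4,5,5,2],1)]"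

definition BB :: "nat list list" where
  "BB = [[0,1,0,3,4,5,6,4,8,0,1,0,3,1,14,0,3,5,4,8,8,14],
    [0,1,2,0,2,1,0,2,0,1,2,0,12,2,1,0,0,1,12,2,0,1],
    [0,1,2,3,0,1,6,0,2,0,1,2,3,1,6,0,3,1,0,2,2,6],
    [0,1,2,3,4,5,6,4,8,0,1,2,3,1,14,0,3,5,4,8,8,14],
    [1,1,0,1,0,0,1,1,0,0,0,1,1,1,1,0,0,1,0,1,1,0]]"

definition T0 :: "lt list" where "T0 = [L0,L1,L2,L3,L4,L5,L6,L7,L8,L9,L10,L11,L12,L7,L8,L9,L13,L14,L15,L1]"

fun qds :: "lt list \<Rightarrow> lt list" where
  "qds [] = []" | "qds (a # xs) = qd0 a # qd1 a # qds xs"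

definition lk :: "nat list \<Rightarrow> lt \<Rightarrow> nat" where "lk xs a = xs ! ordl a"

fun idx :: "'a list \<Rightarrow> 'a \<Rightarrow> nat" where
  "idx [] v = 0" | "idx (x # xs) v = (if x = v then 0 else Suc (idx xs v))"

definition relabel :: "'a list \<Rightarrow> nat list" where "relabel xs = map (idx xs) xs"

type_synonym st = "nat list \<times> nat list \<times> nat list \<times> nat"

fun tr :: "st \<Rightarrow> st list" where
  "tr (a, b, c, d) =
    (let A1 = relabel (map (\<lambda>x. lk a (qd1 x)) allL);
         Ap = relabel (map (\<lambda>x. (lk a (qd0 x), lk b (qd1 x))) allL);
         Bp = relabel (map (\<lambda>x. (lk b (qd0 x), lk b (qd1 x))) allL);
         C0 = relabel (map (\<lambda>x. lk c (qd0 x)) allL);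
         Cpp = relabel (map (\<lambda>x. (lk b (qd0 x), lk c (qd1 x))) allL)
     in if d = 0 then [(A1, Bp, C0, 0), (Ap, Bp, Cpp, 1)] else [(A1, Bp, Cpp, 1), (Ap, Bp, C0, 1)])"

fun pat :: "st \<Rightarrow> nat \<Rightarrow> lt list \<Rightarrow> bool" where
  "pat (a, b, c, d) n t = (lk a (t ! 0) = lk a (t ! n) \<and>
     map (lk b) (take (n - d) (drop 1 t)) = map (lk b) (take (n - d) (drop (n + 1) t)) \<and>
     lk c (t ! (n + 1 - d)) = lk c (t ! (2 * n + 1 - d)))"

fun pat0 :: "st \<Rightarrow> nat \<Rightarrow> lt list \<Rightarrow> bool" where
  "pat0 (a, b, c, d) n t = (
     map (lk b) (take (n - d) t) = map (lk b) (take (n - d) (drop n t)) \<and>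
     lk c (t ! (n - d)) = lk c (t ! (2 * n - d)))"

lemma check0: "list_all (\<lambda>t. take 20 (qds t) \<in> set FF \<and> take 20 (tl (qds t)) \<in> set FF) FF"
  by code_simp
lemma check1: "list_all (\<lambda>s. list_all (\<lambda>s'. s' \<in> set LL) (tr s)) LL"
  by code_simp
lemma check3: "list_all (\<lambda>t. take 9 (qds t) \<in> set W0 \<and> take 9 (tl (qds t)) \<in> set W1) FF"
  by code_simp
lemma check4: "list_all (\<lambda>b. list_all (\<lambda>u. list_all (\<lambda>v. map (lk b) u \<noteq> map (lk b) v) W1) W0) BB"
  by code_simp
lemma check5: "list_all (\<lambda>t. list_all (\<lambda>n. map gd (take n t) = map gd (take n (drop n t)) \<longrightarrow> map gd (take n t) \<in> {[0],[1],[1,0]}) [1..<10]) FF"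
  by code_simp
lemma check2: "list_all (\<lambda>s. list_all (\<lambda>n. list_all (\<lambda>t. \<not> pat s n t) FF \<and> \<not> pat0 s n T0) [5..<10]) LL"
  by code_simp
lemma check6: "list_all (\<lambda>s. snd (snd (snd s)) \<le> 1 \<and> fst (snd s) \<in> set BB) LL"
  by code_simp
lemma check7: "(replicate 22 0, map gamma [0..<22], replicate 22 0, 0) \<in> set LL"
  by code_simp
lemma check8: "list_all (\<lambda>a. map (\<lambda>i. allL ! i) (q_table ! a) = [qd0 (allL ! a), qd1 (allL ! a)] \<and>
   gd (allL ! a) = gamma a \<and> ordl (allL ! a) = a \<and> length (q_table ! a) = 2 \<and> list_all (\<lambda>i. i < 22) (q_table ! a)) [0..<22]"
  by code_simp
lemma check9: "list_all (\<lambda>u. allL ! ordl u = u) allL"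
  by code_simp
lemma check10: "T0 \<in> set FF"
  by code_simp
lemma q_facts: assumes "a < 22"
  shows "length (q a) = 2" "\<forall>i\<in>set (q a). i < 22"
    "map (\<lambda>i. allL ! i) (q a) = [qd0 (allL ! a), qd1 (allL ! a)]"
    "gd (allL ! a) = gamma a" "ordl (allL ! a) = a"
proof -
  have "a \<in> set [0..<22]" using assms by simp
  then have "map (\<lambda>i. allL ! i) (q_table ! a) = [qd0 (allL ! a), qd1 (allL ! a)] \<and>
   gd (allL ! a) = gamma a \<and> ordl (allL ! a) = a \<and> length (q_table ! a) = 2 \<and> list_all (\<lambda>i. i < 22) (q_table ! a)"
    using check8 by (simp add: list_all_iff del: upt_Suc)
  then show "length (q a) = 2" "\<forall>i\<in>set (q a). i < 22"
    "map (\<lambda>i. allL ! i) (q a) = [qd0 (allL ! a), qd1 (allL ! a)]"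
    "gd (allL ! a) = gamma a" "ordl (allL ! a) = a"
    by (auto simp: q_def list_all_iff)
qed

lemma length_q_star: "\<forall>x\<in>set xs. x < 22 \<Longrightarrow> length (q_star xs) = 2 * length xs"
  by (induction xs) (auto simp: q_star_def q_facts)

lemma set_q_star: "\<forall>x\<in>set xs. x < 22 \<Longrightarrow> \<forall>y\<in>set (q_star xs). y < 22"
  using q_facts(2) by (auto simp: q_star_def)

lemma q_star_append: "q_star (xs @ ys) = q_star xs @ q_star ys"
  by (simp add: q_star_def)

lemma q_star_nth: "\<forall>x\<in>set xs. x < 22 \<Longrightarrow> j < 2 * length xs \<Longrightarrow>
   q_star xs ! j = q (xs ! (j div 2)) ! (j mod 2)"
proof (induction xs arbitrary: j)
  case Nil then show ?case by simp
next
  case (Cons a xs)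
  have la: "length (q a) = 2" using Cons.prems q_facts by simp
  show ?case
  proof (cases "j < 2")
    case True
    then show ?thesis using la by (simp add: q_star_def nth_append)
  next
    case False
    then have "q_star (a # xs) ! j = q_star xs ! (j - 2)"
      using la by (simp add: q_star_def nth_append)
    also have "\<dots> = q (xs ! ((j - 2) div 2)) ! ((j - 2) mod 2)"
      using Cons False by auto
    also have "(j - 2) div 2 = j div 2 - 1" using False by (simp add: div_if)
    also have "(j - 2) mod 2 = j mod 2" using False by (simp add: mod_if)
    moreover have "j div 2 \<noteq> 0" using False by auto
    ultimately show ?thesis by (simp add: nth_Cons')
  qed
qed

definition Wq :: "nat \<Rightarrow> nat list" where "Wq n = (q_star ^^ n) [0]"

lemma Wq_Suc: "Wq (Suc n) = q_star (Wq n)" by (simp add: Wq_def)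

lemma Wq_set: "\<forall>y\<in>set (Wq n). y < 22"
  by (induction n) (auto simp: Wq_def intro: set_q_star[rule_format])

lemma Wq_len: "length (Wq n) = 2 ^ n"
  by (induction n) (auto simp: Wq_Suc length_q_star Wq_set, simp add: Wq_def)

lemma take_q_star: "\<forall>x\<in>set xs. x < 22 \<Longrightarrow> take (2 * k) (q_star xs) = q_star (take k xs)"
proof -
  assume h: "\<forall>x\<in>set xs. x < 22"
  have "q_star xs = q_star (take k xs) @ q_star (drop k xs)"
    by (metis append_take_drop_id q_star_append)
  moreover have "length (q_star (take k xs)) = 2 * min k (length xs)"
    using h by (subst length_q_star) (auto dest: in_set_takeD)
  moreover have "k > length xs \<Longrightarrow> drop k xs = []" by simp
  ultimately show ?thesis
    by (cases "k \<le> length xs") (auto simp: q_star_def)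
qed

lemma Wq_prefix: "n \<le> m \<Longrightarrow> take (2 ^ n) (Wq m) = Wq n"
proof (induction n arbitrary: m)
  case 0
  then show ?case
  proof (induction m)
    case 0 then show ?case by (simp add: Wq_def)
  next
    case (Suc m)
    have "take 1 (Wq (Suc m)) = take 1 (take (2 * 1) (Wq (Suc m)))" by simp
    also have "\<dots> = take 1 (q_star (take 1 (Wq m)))"
      by (simp only: Wq_Suc take_q_star[OF Wq_set])
    also have "take 1 (Wq m) = [0]" using Suc by (simp add: Wq_def)
    finally show ?case by (simp add: Wq_def q_star_def q_def q_table_def)
  qed
next
  case (Suc n)
  then obtain m' where m: "m = Suc m'" "n \<le> m'" by (cases m) auto
  have "take (2 ^ Suc n) (Wq m) = take (2 * 2 ^ n) (q_star (Wq m'))" by (simp add: m Wq_Suc)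
  also have "\<dots> = q_star (take (2 ^ n) (Wq m'))" by (rule take_q_star[OF Wq_set])
  also have "\<dots> = Wq (Suc n)" using Suc m by (simp add: Wq_Suc)
  finally show ?case .
qed

lemma q_omega_Wq: "n < 2 ^ m \<Longrightarrow> q_omega n = Wq m ! n"
proof -
  assume h: "n < 2 ^ m"
  have h2: "n < 2 ^ Suc n" using less_exp[of n] by (simp only: power_Suc)
  have "q_omega n = Wq (Suc n) ! n" by (simp add: q_omega_def Wq_def del: funpow.simps)
  also have "\<dots> = take (2 ^ min m (Suc n)) (Wq (Suc n)) ! n"
    using h h2 by (simp add: min_def)
  also have "\<dots> = Wq (min m (Suc n)) ! n" by (simp add: Wq_prefix)
  also have "\<dots> = take (2 ^ min m (Suc n)) (Wq m) ! n" by (simp add: Wq_prefix)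
  also have "\<dots> = Wq m ! n" using h h2 by (simp add: min_def)
  finally show ?thesis .
qed

lemma q_omega_lt: "q_omega n < 22"
proof -
  have e: "q_omega n = Wq n ! n" by (rule q_omega_Wq) (rule less_exp)
  have "Wq n ! n \<in> set (Wq n)" using Wq_len[of n] less_exp[of n] by (intro nth_mem) simp
  then show ?thesis using Wq_set[of n] e by simp
qed

lemma q_omega_rec: "b < 2 \<Longrightarrow> q_omega (2 * k + b) = q (q_omega k) ! b"
proof -
  assume b: "b < 2"
  define M where "M = Suc (2 * k + b)"
  have "k < M" unfolding M_def by simp
  then have kM: "k < 2 ^ M" using less_exp[of M] by linarith
  have "2 * k + b < 2 ^ Suc M" using kM b by simp
  then have "q_omega (2 * k + b) = Wq (Suc M) ! (2 * k + b)" by (rule q_omega_Wq)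
  also have "\<dots> = q (Wq M ! k) ! b"
    using kM b by (simp add: Wq_Suc q_star_nth Wq_set Wq_len)
  also have "Wq M ! k = q_omega k" using kM by (simp add: q_omega_Wq)
  finally show ?thesis .
qed
definition wd :: "nat \<Rightarrow> lt" where "wd k = allL ! q_omega k"

lemma wd_rec: "wd (2 * k) = qd0 (wd k)" "wd (2 * k + 1) = qd1 (wd k)"
proof -
  have m: "map (\<lambda>i. allL ! i) (q (q_omega k)) = [qd0 (wd k), qd1 (wd k)]"
    using q_facts(3)[OF q_omega_lt[of k]] by (simp add: wd_def)
  have l: "length (q (q_omega k)) = 2" using q_facts(1)[OF q_omega_lt[of k]] .
  have "wd (2 * k) = allL ! (q (q_omega k) ! 0)" using q_omega_rec[of 0 k] by (simp add: wd_def)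
  also have "\<dots> = map (\<lambda>i. allL ! i) (q (q_omega k)) ! 0" using l by simp
  finally show "wd (2 * k) = qd0 (wd k)" using m by simp
  have "wd (2 * k + 1) = allL ! (q (q_omega k) ! 1)" using q_omega_rec[of 1 k] by (simp add: wd_def)
  also have "\<dots> = map (\<lambda>i. allL ! i) (q (q_omega k)) ! 1" using l by simp
  finally show "wd (2 * k + 1) = qd1 (wd k)" using m by simp
qed

lemma wdE: "p = 2 * z \<Longrightarrow> wd p = qd0 (wd z)" "p = 2 * z + 1 \<Longrightarrow> wd p = qd1 (wd z)"
  using wd_rec by auto

lemma wd_gen: "wd j = (if even j then qd0 else qd1) (wd (j div 2))"
  by (cases "even j") (auto intro: wdE elim!: evenE oddE)

lemma length_qds: "length (qds xs) = 2 * length xs"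
  by (induction xs) auto

lemma qds_nth: "j < 2 * length xs \<Longrightarrow> qds xs ! j = (if even j then qd0 else qd1) (xs ! (j div 2))"
proof (induction xs arbitrary: j)
  case Nil then show ?case by simp
next
  case (Cons a xs)
  show ?case
  proof (cases "j < 2")
    case True
    then have "j = 0 \<or> j = 1" by auto
    then show ?thesis by auto
  next
    case False
    define j' where "j' = j - 2"
    have j: "j = Suc (Suc j')" using False by (simp add: j'_def)
    then have "j' < 2 * length xs" using Cons.prems by simp
    then show ?thesis using Cons.IH[of j'] j by simp
  qed
qed

lemma take_qds: "take (2 * k) (qds xs) = qds (take k xs)"
proof (induction xs arbitrary: k)
  case Nil then show ?case by simp
next
  case (Cons a xs)
  then show ?case by (cases k) auto
qed

definition segd :: "nat \<Rightarrow> nat \<Rightarrow> lt list" where "segd i K = map wd [i..<i+K]"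

lemma segd_rec: "segd i K = take K (drop (i mod 2) (qds (segd (i div 2) K)))"
proof (cases "K = 0")
  case True then show ?thesis by (simp add: segd_def)
next
  case False
  have len: "length (take K (drop (i mod 2) (qds (segd (i div 2) K)))) = K"
    using False by (simp add: length_qds segd_def)
  show ?thesis
  proof (rule nth_equalityI)
    show "length (segd i K) = length (take K (drop (i mod 2) (qds (segd (i div 2) K))))"
      using len by (simp add: segd_def)
  next
    fix j assume "j < length (segd i K)"
    then have j: "j < K" by (simp add: segd_def)
    have j2: "i mod 2 + j < 2 * K" using j by linarith
    have d: "(i mod 2 + j) div 2 < K" using j by linarith
    have e1: "(i + j) div 2 = i div 2 + (i mod 2 + j) div 2" by presburger
    have e2: "even (i + j) = even (i mod 2 + j)" by (simp add: even_add)
    have "take K (drop (i mod 2) (qds (segd (i div 2) K))) ! j = qds (segd (i div 2) K) ! (i mod 2 + j)"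
      using j j2 by (simp add: length_qds segd_def)
    also have "\<dots> = (if even (i mod 2 + j) then qd0 else qd1) (segd (i div 2) K ! ((i mod 2 + j) div 2))"
      using j2 by (simp add: qds_nth segd_def)
    also have "\<dots> = (if even (i + j) then qd0 else qd1) (wd ((i + j) div 2))"
      using d e1 e2 by (simp add: segd_def)
    also have "\<dots> = wd (i + j)" by (rule wd_gen[symmetric])
    also have "\<dots> = segd i K ! j" using j by (simp add: segd_def)
    finally show "segd i K ! j = take K (drop (i mod 2) (qds (segd (i div 2) K))) ! j" by simp
  qed
qed

lemma wd0: "wd 0 = L0"
proof -
  have "q_omega 0 = Wq 0 ! 0" by (rule q_omega_Wq) simp
  then show ?thesis by (simp add: wd_def Wq_def allL_def)
qed

lemma segd0: "segd 0 20 = T0"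
proof -
  define X where "X = segd 0 20"
  have fx: "X = take 20 (qds X)" unfolding X_def by (subst segd_rec) simp
  have lx: "length X = 20" by (simp add: X_def segd_def)
  have st: "take (2 * k) X = qds (take k X)" if "k \<le> 10" for k
  proof -
    have "take (2 * k) X = take (2 * k) (take 20 (qds X))" using fx by simp
    also have "\<dots> = take (2 * k) (qds X)" using that by (simp add: min_def)
    finally show ?thesis by (simp add: take_qds)
  qed
  have t1: "take 1 X = [L0]" using wd0 by (simp add: X_def segd_def take_Suc_conv_app_nth)
  have t2: "take 2 X = [L0, L1]" using st[of 1] t1 by simp
  have t4: "take 4 X = [L0,L1,L2,L3]" using st[of 2] t2 by simp
  have t8: "take 8 X = qds [L0,L1,L2,L3]" using st[of 4] t4 by simp
  have t16: "take 16 X = qds (qds [L0,L1,L2,L3])" using st[of 8] t8 by simp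
  have "take 10 X = take 10 (take 16 X)" by simp
  then have t10: "take 10 X = take 10 (qds (qds [L0,L1,L2,L3]))" using t16 by simp
  have "X = take 20 X" using lx by simp
  also have "\<dots> = qds (take 10 X)" using st[of 10] by simp
  finally show ?thesis using t10 by (simp add: X_def T0_def)
qed

lemma segd_FF: "segd i 20 \<in> set FF"
proof (induction i rule: less_induct)
  case (less i)
  show ?case
  proof (cases "i = 0")
    case True
    have "T0 \<in> set FF" by (rule check10)
    then show ?thesis using True segd0 by simp
  next
    case False
    then have "segd (i div 2) 20 \<in> set FF" using less by simp
    then have "take 20 (qds (segd (i div 2) 20)) \<in> set FF \<and> take 20 (tl (qds (segd (i div 2) 20))) \<in> set FF"
      using check0 by (simp add: list_all_iff)
    moreover have "i mod 2 = 0 \<or> i mod 2 = 1" by auto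
    ultimately show ?thesis by (subst segd_rec) (auto simp: drop_Suc)
  qed
qed
lemma ordl_lt: "ordl u < 22" by (cases u) auto
lemma allL_ordl: "allL ! ordl u = u" by (cases u) (simp_all add: allL_def)
lemma in_allL: "u \<in> set allL" by (cases u) (simp_all add: allL_def)
lemma len_allL: "length allL = 22" by (simp add: allL_def)

lemma idx_nth: "v \<in> set ys \<Longrightarrow> ys ! idx ys v = v \<and> idx ys v < length ys"
  by (induction ys) auto

lemma lk_relabel: "(lk (relabel (map f allL)) u = lk (relabel (map f allL)) v) = (f u = f v)"
proof -
  let ?ys = "map f allL"
  have "lk (relabel ?ys) u = idx ?ys (f u)" using ordl_lt[of u] len_allL
    by (simp add: lk_def relabel_def allL_ordl)
  moreover have "lk (relabel ?ys) v = idx ?ys (f v)" using ordl_lt[of v] len_allL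
    by (simp add: lk_def relabel_def allL_ordl)
  moreover have "f u \<in> set ?ys" "f v \<in> set ?ys" using in_allL by auto
  ultimately show ?thesis using idx_nth by metis
qed

definition occ :: "st \<Rightarrow> nat \<Rightarrow> nat \<Rightarrow> bool" where
  "occ s n x = (case s of (a, b, c, d) \<Rightarrow>
     (x = 0 \<or> lk a (wd (x - 1)) = lk a (wd (x - 1 + n))) \<and>
     (\<forall>j < n - d. lk b (wd (x + j)) = lk b (wd (x + j + n))) \<and>
     lk c (wd (x + (n - d))) = lk c (wd (x + (n - d) + n)))"

lemma step:
  assumes occ: "occ (a, b, c, d) (2 * m) x" and m: "m \<ge> 1" and d: "d \<le> 1"
  shows "\<exists>s'\<in>set (tr (a, b, c, d)). \<exists>x'. occ s' m x'"
proof -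
  define A1 where "A1 = relabel (map (\<lambda>x. lk a (qd1 x)) allL)"
  define Ap where "Ap = relabel (map (\<lambda>x. (lk a (qd0 x), lk b (qd1 x))) allL)"
  define Bp where "Bp = relabel (map (\<lambda>x. (lk b (qd0 x), lk b (qd1 x))) allL)"
  define C0 where "C0 = relabel (map (\<lambda>x. lk c (qd0 x)) allL)"
  define Cpp where "Cpp = relabel (map (\<lambda>x. (lk b (qd0 x), lk c (qd1 x))) allL)"
  have trd: "tr (a, b, c, d) = (if d = 0 then [(A1, Bp, C0, 0), (Ap, Bp, Cpp, 1)]
      else [(A1, Bp, Cpp, 1), (Ap, Bp, C0, 1)])"
    by (simp add: A1_def Ap_def Bp_def C0_def Cpp_def Let_def)
  have eA1: "\<And>u v. (lk A1 u = lk A1 v) = (lk a (qd1 u) = lk a (qd1 v))"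
    unfolding A1_def by (rule lk_relabel)
  have eAp: "\<And>u v. (lk Ap u = lk Ap v) = (lk a (qd0 u) = lk a (qd0 v) \<and> lk b (qd1 u) = lk b (qd1 v))"
    unfolding Ap_def by (subst lk_relabel) simp
  have eBp: "\<And>u v. (lk Bp u = lk Bp v) = (lk b (qd0 u) = lk b (qd0 v) \<and> lk b (qd1 u) = lk b (qd1 v))"
    unfolding Bp_def by (subst lk_relabel) simp
  have eC0: "\<And>u v. (lk C0 u = lk C0 v) = (lk c (qd0 u) = lk c (qd0 v))"
    unfolding C0_def by (rule lk_relabel)
  have eCpp: "\<And>u v. (lk Cpp u = lk Cpp v) = (lk b (qd0 u) = lk b (qd0 v) \<and> lk c (qd1 u) = lk c (qd1 v))"
    unfolding Cpp_def by (subst lk_relabel) simp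
  from occ have OA: "x = 0 \<or> lk a (wd (x - 1)) = lk a (wd (x - 1 + 2 * m))"
    and OB: "\<And>j. j < 2 * m - d \<Longrightarrow> lk b (wd (x + j)) = lk b (wd (x + j + 2 * m))"
    and OC: "lk c (wd (x + (2 * m - d))) = lk c (wd (x + (2 * m - d) + 2 * m))"
    by (auto simp: occ_def)
  define y where "y = x div 2"
  have xy: "x = 2 * y \<or> x = 2 * y + 1" unfolding y_def by auto
  have dd: "d = 0 \<or> d = 1" using d by auto
  have Aev: "y = 0 \<or> lk A1 (wd (y - 1)) = lk A1 (wd (y - 1 + m))" if ev: "x = 2 * y"
  proof (cases "y = 0")
    case False
    then have "lk a (wd (x - 1)) = lk a (wd (x - 1 + 2 * m))" using OA ev by simp
    moreover have "wd (x - 1) = qd1 (wd (y - 1))" by (rule wdE(2)) (use ev False in arith)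
    moreover have "wd (x - 1 + 2 * m) = qd1 (wd (y - 1 + m))" by (rule wdE(2)) (use ev False in arith)
    ultimately show ?thesis by (simp add: eA1)
  qed simp
  have Aod: "lk a (qd0 (wd y)) = lk a (qd0 (wd (y + m)))" if od: "x = 2 * y + 1"
  proof -
    have "lk a (wd (x - 1)) = lk a (wd (x - 1 + 2 * m))" using OA od by simp
    moreover have "wd (x - 1) = qd0 (wd y)" by (rule wdE(1)) (use od in arith)
    moreover have "wd (x - 1 + 2 * m) = qd0 (wd (y + m))" by (rule wdE(1)) (use od in arith)
    ultimately show ?thesis by simp
  qed
  have Bpair: "lk Bp (wd z) = lk Bp (wd (z + m))"
    if "x + j = 2 * z" "j + 1 < 2 * m - d" for z j
  proof -
    have h0: "lk b (wd (x + j)) = lk b (wd (x + j + 2 * m))" by (rule OB) (use that in linarith)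
    have h1: "lk b (wd (x + (j + 1))) = lk b (wd (x + (j + 1) + 2 * m))" by (rule OB) (use that in linarith)
    have "wd (x + j) = qd0 (wd z)" by (rule wdE(1)) (use that in arith)
    moreover have "wd (x + j + 2 * m) = qd0 (wd (z + m))" by (rule wdE(1)) (use that in arith)
    moreover have "wd (x + (j + 1)) = qd1 (wd z)" by (rule wdE(2)) (use that in arith)
    moreover have "wd (x + (j + 1) + 2 * m) = qd1 (wd (z + m))" by (rule wdE(2)) (use that in arith)
    ultimately show ?thesis using h0 h1 by (simp add: eBp)
  qed
  consider (e0) "x = 2 * y" "d = 0" | (e1) "x = 2 * y" "d = 1" | (o0) "x = 2 * y + 1" "d = 0"
    | (o1) "x = 2 * y + 1" "d = 1" using xy dd by blast
  then show ?thesis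
  proof cases
    case e0
    have B: "\<forall>j < m - 0. lk Bp (wd (y + j)) = lk Bp (wd (y + j + m))"
    proof (intro allI impI)
      fix j assume "j < m - 0"
      then show "lk Bp (wd (y + j)) = lk Bp (wd (y + j + m))"
        using Bpair[of "2 * j" "y + j"] e0 by (simp add: add.assoc)
    qed
    have "wd (x + (2 * m - d)) = qd0 (wd (y + (m - 0)))" by (rule wdE(1)) (use e0 in arith)
    moreover have "wd (x + (2 * m - d) + 2 * m) = qd0 (wd (y + (m - 0) + m))" by (rule wdE(1)) (use e0 in arith)
    ultimately have C: "lk C0 (wd (y + (m - 0))) = lk C0 (wd (y + (m - 0) + m))" using OC by (simp add: eC0)
    have "occ (A1, Bp, C0, 0) m y" unfolding occ_def using Aev[OF e0(1)] B C by simp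
    moreover have "(A1, Bp, C0, 0) \<in> set (tr (a, b, c, d))" using trd e0 by simp
    ultimately show ?thesis by blast
  next
    case e1
    have B: "\<forall>j < m - 1. lk Bp (wd (y + j)) = lk Bp (wd (y + j + m))"
    proof (intro allI impI)
      fix j assume "j < m - 1"
      then show "lk Bp (wd (y + j)) = lk Bp (wd (y + j + m))"
        using Bpair[of "2 * j" "y + j"] e1 by (simp add: add.assoc)
    qed
    have h0: "lk b (wd (x + (2 * m - 2))) = lk b (wd (x + (2 * m - 2) + 2 * m))" by (rule OB) (use e1 m in arith)
    have "wd (x + (2 * m - 2)) = qd0 (wd (y + (m - 1)))" by (rule wdE(1)) (use e1 m in arith)
    moreover have "wd (x + (2 * m - 2) + 2 * m) = qd0 (wd (y + (m - 1) + m))" by (rule wdE(1)) (use e1 m in arith)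
    moreover have "wd (x + (2 * m - d)) = qd1 (wd (y + (m - 1)))" by (rule wdE(2)) (use e1 m in arith)
    moreover have "wd (x + (2 * m - d) + 2 * m) = qd1 (wd (y + (m - 1) + m))" by (rule wdE(2)) (use e1 m in arith)
    ultimately have C: "lk Cpp (wd (y + (m - 1))) = lk Cpp (wd (y + (m - 1) + m))" using OC h0 by (simp add: eCpp)
    have "occ (A1, Bp, Cpp, 1) m y" unfolding occ_def using Aev[OF e1(1)] B C by simp
    moreover have "(A1, Bp, Cpp, 1) \<in> set (tr (a, b, c, d))" using trd e1 by simp
    ultimately show ?thesis by blast
  next
    case o0
    have h0: "lk b (wd (x + 0)) = lk b (wd (x + 0 + 2 * m))" by (rule OB) (use o0 m in arith)
    have "wd (x + 0) = qd1 (wd y)" by (rule wdE(2)) (use o0 in arith)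
    moreover have "wd (x + 0 + 2 * m) = qd1 (wd (y + m))" by (rule wdE(2)) (use o0 in arith)
    ultimately have A: "lk Ap (wd (y + 1 - 1)) = lk Ap (wd (y + 1 - 1 + m))"
      using h0 Aod[OF o0(1)] by (simp add: eAp)
    have B: "\<forall>j < m - 1. lk Bp (wd (y + 1 + j)) = lk Bp (wd (y + 1 + j + m))"
    proof (intro allI impI)
      fix j assume "j < m - 1"
      then show "lk Bp (wd (y + 1 + j)) = lk Bp (wd (y + 1 + j + m))"
        using Bpair[of "2 * j + 1" "y + 1 + j"] o0 by (simp add: add.assoc)
    qed
    have h1: "lk b (wd (x + (2 * m - 1))) = lk b (wd (x + (2 * m - 1) + 2 * m))" by (rule OB) (use o0 m in arith)
    have "wd (x + (2 * m - 1)) = qd0 (wd (y + 1 + (m - 1)))" by (rule wdE(1)) (use o0 m in arith)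
    moreover have "wd (x + (2 * m - 1) + 2 * m) = qd0 (wd (y + 1 + (m - 1) + m))" by (rule wdE(1)) (use o0 m in arith)
    moreover have "wd (x + (2 * m - d)) = qd1 (wd (y + 1 + (m - 1)))" by (rule wdE(2)) (use o0 m in arith)
    moreover have "wd (x + (2 * m - d) + 2 * m) = qd1 (wd (y + 1 + (m - 1) + m))" by (rule wdE(2)) (use o0 m in arith)
    ultimately have C: "lk Cpp (wd (y + 1 + (m - 1))) = lk Cpp (wd (y + 1 + (m - 1) + m))" using OC h1 by (simp add: eCpp)
    have "occ (Ap, Bp, Cpp, 1) m (y + 1)" unfolding occ_def using A B C by simp
    moreover have "(Ap, Bp, Cpp, 1) \<in> set (tr (a, b, c, d))" using trd o0 by simp
    ultimately show ?thesis by blast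
  next
    case o1
    have h0: "lk b (wd (x + 0)) = lk b (wd (x + 0 + 2 * m))" by (rule OB) (use o1 m in arith)
    have "wd (x + 0) = qd1 (wd y)" by (rule wdE(2)) (use o1 in arith)
    moreover have "wd (x + 0 + 2 * m) = qd1 (wd (y + m))" by (rule wdE(2)) (use o1 in arith)
    ultimately have A: "lk Ap (wd (y + 1 - 1)) = lk Ap (wd (y + 1 - 1 + m))"
      using h0 Aod[OF o1(1)] by (simp add: eAp)
    have B: "\<forall>j < m - 1. lk Bp (wd (y + 1 + j)) = lk Bp (wd (y + 1 + j + m))"
    proof (intro allI impI)
      fix j assume "j < m - 1"
      then show "lk Bp (wd (y + 1 + j)) = lk Bp (wd (y + 1 + j + m))"
        using Bpair[of "2 * j + 1" "y + 1 + j"] o1 by (simp add: add.assoc)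
    qed
    have "wd (x + (2 * m - d)) = qd0 (wd (y + 1 + (m - 1)))" by (rule wdE(1)) (use o1 m in arith)
    moreover have "wd (x + (2 * m - d) + 2 * m) = qd0 (wd (y + 1 + (m - 1) + m))" by (rule wdE(1)) (use o1 m in arith)
    ultimately have C: "lk C0 (wd (y + 1 + (m - 1))) = lk C0 (wd (y + 1 + (m - 1) + m))" using OC by (simp add: eC0)
    have "occ (Ap, Bp, C0, 1) m (y + 1)" unfolding occ_def using A B C by simp
    moreover have "(Ap, Bp, C0, 1) \<in> set (tr (a, b, c, d))" using trd o1 by simp
    ultimately show ?thesis by blast
  qed
qed
lemma segd_nth: "j < K \<Longrightarrow> segd i K ! j = wd (i + j)"
  by (simp add: segd_def)

lemma segd_take: "r + k \<le> K \<Longrightarrow> take k (drop r (segd i K)) = segd (i + r) k"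
  by (simp add: segd_def take_map drop_map add.assoc)

lemma map_segd_eq: "(map f (segd i k) = map f (segd i' k)) = (\<forall>j<k. f (wd (i + j)) = f (wd (i' + j)))"
  by (simp add: segd_def list_eq_iff_nth_eq)

lemma seg9: "segd p 9 = take 9 (drop (p mod 2) (qds (segd (p div 2) 20)))"
proof -
  have "segd p 9 = take 9 (drop 0 (segd p 20))" using segd_take[of 0 9 20 p] by simp
  also have "\<dots> = take 9 (take 20 (drop (p mod 2) (qds (segd (p div 2) 20))))"
    by (subst segd_rec) simp
  finally show ?thesis by simp
qed

lemma seg9_W: "even p \<Longrightarrow> segd p 9 \<in> set W0" "odd p \<Longrightarrow> segd p 9 \<in> set W1"
proof -
  have "take 9 (qds (segd (p div 2) 20)) \<in> set W0 \<and> take 9 (tl (qds (segd (p div 2) 20))) \<in> set W1"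
    using check3 segd_FF[of "p div 2"] by (simp add: list_all_iff)
  then show "even p \<Longrightarrow> segd p 9 \<in> set W0" "odd p \<Longrightarrow> segd p 9 \<in> set W1"
    by (auto simp: seg9 drop_Suc odd_iff_mod_2_eq_one)
qed

lemma sync:
  assumes b: "b \<in> set BB" and h: "\<forall>j<9. lk b (wd (p + j)) = lk b (wd (p' + j))"
  shows "even p = even p'"
proof (rule ccontr)
  assume ne: "even p \<noteq> even p'"
  have eq: "map (lk b) (segd p 9) = map (lk b) (segd p' 9)" using h by (simp add: map_segd_eq)
  have key: "map (lk b) u \<noteq> map (lk b) v" if "u \<in> set W0" "v \<in> set W1" for u v
    using check4 b that by (simp add: list_all_iff)
  show False
  proof (cases "even p")
    case True
    then have "odd p'" using ne by simp
    then have "segd p' 9 \<in> set W1" by (rule seg9_W(2))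
    moreover have "segd p 9 \<in> set W0" using True by (rule seg9_W(1))
    ultimately show False using key eq by blast
  next
    case False
    then have "even p'" using ne by simp
    then have "segd p' 9 \<in> set W0" by (rule seg9_W(1))
    moreover have "segd p 9 \<in> set W1" using False by (rule seg9_W(2))
    ultimately show False using key eq by metis
  qed
qed

lemma base:
  assumes s: "s \<in> set LL" and n: "5 \<le> n" "n < 10"
  shows "\<not> occ s n x"
proof
  assume o: "occ s n x"
  obtain a b c d where sd: "s = (a, b, c, d)" by (cases s)
  have d: "d \<le> 1" using check6 s sd by (auto simp: list_all_iff)
  have "n \<in> set [5..<10]" unfolding set_upt using n by simp
  moreover have "\<forall>s\<in>set LL. \<forall>n\<in>set [5..<10]. list_all (\<lambda>t. \<not> pat s n t) FF \<and> \<not> pat0 s n T0"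
    using check2 unfolding list_all_iff .
  ultimately have "list_all (\<lambda>t. \<not> pat s n t) FF \<and> \<not> pat0 s n T0" using s by blast
  then have nl: "(\<forall>t\<in>set FF. \<not> pat s n t) \<and> \<not> pat0 s n T0" unfolding list_all_iff .
  from o have OA: "x = 0 \<or> lk a (wd (x - 1)) = lk a (wd (x - 1 + n))"
    and OB: "\<forall>j < n - d. lk b (wd (x + j)) = lk b (wd (x + j + n))"
    and OC: "lk c (wd (x + (n - d))) = lk c (wd (x + (n - d) + n))"
    by (auto simp: occ_def sd)
  show False
  proof (cases "x = 0")
    case True
    have "pat0 s n (segd 0 20)"
    proof -
      have "take (n - d) (segd 0 20) = segd 0 (n - d)" using segd_take[of 0 "n - d" 20 0] n by simp
      moreover have "take (n - d) (drop n (segd 0 20)) = segd n (n - d)" using segd_take[of n "n - d" 20 0] n by simp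
      moreover have "map (lk b) (segd 0 (n - d)) = map (lk b) (segd n (n - d))"
        using OB True by (simp add: map_segd_eq add.commute)
      moreover have "segd 0 20 ! (n - d) = wd (x + (n - d))" using True n by (simp add: segd_nth)
      moreover have "segd 0 20 ! (2 * n - d) = wd (x + (n - d) + n)" using True n d by (simp add: segd_nth mult_2)
      ultimately show ?thesis using OC by (simp add: sd)
    qed
    then show False using nl segd0 by simp
  next
    case False
    have "pat s n (segd (x - 1) 20)"
    proof -
      have "take (n - d) (drop 1 (segd (x - 1) 20)) = segd x (n - d)" using segd_take[of 1 "n - d" 20 "x - 1"] n False by simp
      moreover have "take (n - d) (drop (n + 1) (segd (x - 1) 20)) = segd (x + n) (n - d)"
        using segd_take[of "n + 1" "n - d" 20 "x - 1"] n False by simp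
      moreover have "map (lk b) (segd x (n - d)) = map (lk b) (segd (x + n) (n - d))"
        using OB by (simp add: map_segd_eq add.commute add.left_commute)
      moreover have "segd (x - 1) 20 ! 0 = wd (x - 1)" by (simp add: segd_nth)
      moreover have "segd (x - 1) 20 ! n = wd (x - 1 + n)" using n by (simp add: segd_nth)
      moreover have "segd (x - 1) 20 ! (n + 1 - d) = wd (x + (n - d))" using n d False by (simp add: segd_nth)
      moreover have "segd (x - 1) 20 ! (2 * n + 1 - d) = wd (x + (n - d) + n)"
      proof -
        have i: "2 * n + 1 - d < 20" using n by simp
        have e: "x - 1 + (2 * n + 1 - d) = x + (n - d) + n" using n d False by arith
        show ?thesis using segd_nth[OF i, of "x - 1"] e by metis
      qed
      ultimately show ?thesis using OC OA False by (simp add: sd)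
    qed
    then show False using nl segd_FF[of "x - 1"] by blast
  qed
qed

lemma main: "10 \<le> n \<Longrightarrow> s \<in> set LL \<Longrightarrow> \<not> occ s n x"
proof (induction n arbitrary: s x rule: less_induct)
  case (less n)
  obtain a b c d where sd: "s = (a, b, c, d)" by (cases s)
  have d: "d \<le> 1" and bB: "b \<in> set BB" using check6 less.prems(2) sd by (auto simp: list_all_iff)
  show "\<not> occ s n x"
  proof
    assume o: "occ s n x"
    then have OB: "\<forall>j < n - d. lk b (wd (x + j)) = lk b (wd (x + j + n))" by (simp add: occ_def sd)
    show False
    proof (cases "even n")
      case False
      have "\<forall>j<9. lk b (wd (x + j)) = lk b (wd ((x + n) + j))"
        using OB less.prems(1) d by (auto simp: add.commute add.left_commute)
      then have "even x = even (x + n)" by (rule sync[OF bB])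
      then show False using False by simp
    next
      case True
      then obtain m where nm: "n = 2 * m" by (rule evenE)
      have m: "m \<ge> 5" using nm less.prems(1) by simp
      have m1: "m \<ge> 1" using m by simp
      have "occ (a, b, c, d) (2 * m) x" using o sd nm by simp
      then obtain s' x' where s': "s' \<in> set (tr (a, b, c, d))" and o': "occ s' m x'"
        using step[OF _ m1 d] by blast
      have "\<forall>s\<in>set LL. \<forall>s'\<in>set (tr s). s' \<in> set LL" using check1 unfolding list_all_iff .
      then have s'L: "s' \<in> set LL" using less.prems(2) s' sd by blast
      show False
      proof (cases "m \<ge> 10")
        case True
        have "m < n" using nm m by simp
        then show False using less.IH[OF \<open>m < n\<close> True s'L] o' by blast
      next
        case False
        then have "m < 10" by simp
        then show False using base[OF s'L m \<open>m < 10\<close>] o' by blast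
      qed
    qed
  qed
qed

lemma gamma_wd: "gamma (q_omega k) = gd (wd k)"
  using q_facts(4)[OF q_omega_lt[of k]] by (simp add: wd_def)

lemma lk_root: "lk (map gamma [0..<22]) (wd k) = gamma (q_omega k)" "lk (replicate 22 0) u = 0"
proof -
  show "lk (map gamma [0..<22]) (wd k) = gamma (q_omega k)"
    using q_facts(5)[OF q_omega_lt[of k]] q_omega_lt[of k] by (simp add: lk_def wd_def)
  show "lk (replicate 22 0) u = 0" using ordl_lt[of u] by (simp add: lk_def)
qed

lemma gT0: "k < 20 \<Longrightarrow> (gamma \<circ> q_omega) k = gd (T0 ! k)"
  using segd0 segd_nth[of k 20 0] by (simp add: gamma_wd)

theorem theorem6:
  shows "{x. x \<noteq> [] \<and> factor_of (x @ x) (gamma \<circ> q_omega)} = {[0], [1], [1,0]}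
         \<and> weight 22 q = 44"
proof
  show "weight 22 q = 44"
  proof -
    have "(\<Sum>a<22. length (q a)) = (\<Sum>a<(22::nat). 2)" by (rule sum.cong) (auto simp: q_facts)
    then show ?thesis by (simp add: weight_def)
  qed
  show "{x. x \<noteq> [] \<and> factor_of (x @ x) (gamma \<circ> q_omega)} = {[0], [1], [1,0]}"
  proof
    show "{x. x \<noteq> [] \<and> factor_of (x @ x) (gamma \<circ> q_omega)} \<subseteq> {[0], [1], [1,0]}"
    proof
      fix x assume "x \<in> {x. x \<noteq> [] \<and> factor_of (x @ x) (gamma \<circ> q_omega)}"
      then have ne: "x \<noteq> []" and "factor_of (x @ x) (gamma \<circ> q_omega)" by auto
      then obtain i where hi: "\<forall>j < length (x @ x). (gamma \<circ> q_omega) (i + j) = (x @ x) ! j"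
        by (auto simp: factor_of_def)
      define n where "n = length x"
      have h1: "gd (wd (i + j)) = x ! j" if "j < n" for j
        using hi[rule_format, of j] that by (simp add: n_def nth_append gamma_wd)
      have h2: "gd (wd (i + j + n)) = x ! j" if "j < n" for j
      proof -
        have "(gamma \<circ> q_omega) (i + (n + j)) = (x @ x) ! (n + j)" using hi that by (simp add: n_def)
        then have "gd (wd (i + (n + j))) = x ! j" by (simp add: n_def nth_append gamma_wd)
        then show ?thesis by (simp add: add_ac)
      qed
      show "x \<in> {[0], [1], [1,0]}"
      proof (cases "n \<ge> 10")
        case True
        have "\<forall>j<n - 0. lk (map gamma [0..<22]) (wd (i + j)) = lk (map gamma [0..<22]) (wd (i + j + n))"
          using h1 h2 by (simp add: lk_root gamma_wd)
        then have "occ (replicate 22 0, map gamma [0..<22], replicate 22 0, 0) n i"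
          unfolding occ_def by (simp add: lk_root)
        then show ?thesis using main[OF True check7] by blast
      next
        case False
        have "1 \<le> n" using ne by (cases x) (simp_all add: n_def)
        then have n1: "n \<in> set [1..<10]" unfolding set_upt atLeastLessThan_iff using False by simp
        let ?t = "segd i 20"
        have "\<forall>t\<in>set FF. \<forall>n\<in>set [1..<10]. map gd (take n t) = map gd (take n (drop n t)) \<longrightarrow> map gd (take n t) \<in> {[0],[1],[1,0]}"
          using check5 unfolding list_all_iff .
        then have "map gd (take n ?t) = map gd (take n (drop n ?t)) \<longrightarrow> map gd (take n ?t) \<in> {[0],[1],[1,0]}"
          using segd_FF[of i] n1 by blast
        moreover have "take n ?t = segd i n" using segd_take[of 0 n 20 i] False by simp
        moreover have "take n (drop n ?t) = segd (i + n) n" using segd_take[of n n 20 i] False by simp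
        moreover have "map gd (segd (i + n) n) = x"
        proof (rule nth_equalityI)
          show "length (map gd (segd (i + n) n)) = length x" by (simp add: segd_def n_def)
          fix j assume "j < length (map gd (segd (i + n) n))"
          then have j: "j < n" by (simp add: segd_def)
          show "map gd (segd (i + n) n) ! j = x ! j" using h2[OF j] j by (simp add: segd_def add_ac)
        qed
        moreover have "map gd (segd i n) = x"
        proof (rule nth_equalityI)
          show "length (map gd (segd i n)) = length x" by (simp add: segd_def n_def)
          fix j assume "j < length (map gd (segd i n))"
          then have j: "j < n" by (simp add: segd_def)
          show "map gd (segd i n) ! j = x ! j" using h1[OF j] j by (simp add: segd_def)
        qed
        ultimately show ?thesis by simp
      qed
    qed
  next
    have f: "factor_of (x @ x) (gamma \<circ> q_omega)" if "i + 2 * length x \<le> 20"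
       "\<forall>j < 2 * length x. gd (T0 ! (i + j)) = (x @ x) ! j" for x i
      unfolding factor_of_def using that gT0 by (intro exI[of _ i]) auto
    have l2: "\<And>j::nat. (j < 2) = (j = 0 \<or> j = 1)" by arith
    have l4: "\<And>j::nat. (j < 4) = (j = 0 \<or> j = 1 \<or> j = 2 \<or> j = 3)" by arith
    have "factor_of ([0] @ [0]) (gamma \<circ> q_omega)"
      by (rule f[of 4]) (simp_all add: T0_def l2)
    moreover have "factor_of ([1] @ [1]) (gamma \<circ> q_omega)"
      by (rule f[of 0]) (simp_all add: T0_def l2)
    moreover have "factor_of ([1,0] @ [1,0]) (gamma \<circ> q_omega)"
      by (rule f[of 1]) (simp_all add: T0_def l4)
    ultimately show "{[0], [1], [1,0]} \<subseteq> {x. x \<noteq> [] \<and> factor_of (x @ x) (gamma \<circ> q_omega)}"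
      by auto
  qed
qed

end
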